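(* Let $G\sim\mathcal{G}(n,p)$ with $n\cdot p\to 0$ as $n\to\infty$. Then the average complexity of best-first branch-and-bound with potentials for maximum independent set on $G$ is subexponential in $n$.
   Context: $\mathcal{G}(n,p)$ is the binomial random graph on $n$ vertices in which each of the $\binom{n}{2}$ pairs of vertices is an edge with probability $p$, independently. The branch-and-bound algorithm processes the vertices in a fixed order $v_1,\dots,v_n$; a node at level $i$ of the binary search tree corresponds to a partial solution $S\subseteq\{v_1,\dots,v_i\}$, with children $S\cup\{v_{i+1}\}$ and $S$, and has potential $u(S)=|S|+n-i$. Nodes whose partial solution is not independent are discarded; the algorithm always expands an unexplored node of largest potential; the first complete solution reached is returned and all other branches pruned. The average complexity is the expected number of nodes handled. *)

theory Defs
  imports "HOL-Probability.Probability"
begin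

text \<open>Vertices of a graph on n vertices are 0,...,n-1; vertex v_(i+1) of the paper is i.
  A graph is a predicate on ordered pairs (i,j) with i < j < n (edge indicator).\<close>

definition vertex_pairs :: "nat \<Rightarrow> (nat \<times> nat) set" where
  "vertex_pairs n = {(i, j). i < j \<and> j < n}"

definition gnp :: "nat \<Rightarrow> real \<Rightarrow> (nat \<times> nat \<Rightarrow> bool) pmf" where
  "gnp n p = Pi_pmf (vertex_pairs n) False (\<lambda>_. bernoulli_pmf p)"

definition adj :: "(nat \<times> nat \<Rightarrow> bool) \<Rightarrow> nat \<Rightarrow> nat \<Rightarrow> bool" where
  "adj G u v \<longleftrightarrow> u \<noteq> v \<and> G (min u v, max u v)"

definition indep :: "(nat \<times> nat \<Rightarrow> bool) \<Rightarrow> nat set \<Rightarrow> bool" where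
  "indep G S \<longleftrightarrow> (\<forall>u\<in>S. \<forall>v\<in>S. \<not> adj G u v)"

text \<open>A search-tree node at level i with partial solution S \<subseteq> {v_1..v_i} is the pair (i, S).\<close>
type_synonym bbnode = "nat \<times> nat set"

definition potential :: "nat \<Rightarrow> bbnode \<Rightarrow> nat" where
  "potential n x = card (snd x) + (n - fst x)"

definition children :: "bbnode \<Rightarrow> bbnode set" where
  "children x = {(Suc (fst x), insert (fst x) (snd x)), (Suc (fst x), snd x)}"

definition best_first_rule :: "(nat \<Rightarrow> bbnode set \<Rightarrow> bbnode) \<Rightarrow> bool" where
  "best_first_rule sel \<longleftrightarrow>
     (\<forall>n F. finite F \<and> F \<noteq> {} \<longrightarrow>
        sel n F \<in> F \<and> (\<forall>y\<in>F. potential n y \<le> potential n (sel n F)))"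

text \<open>Returns the number of nodes handled after the root:
  each expansion of a node handles its two children (independent ones are kept in the
  frontier, others discarded). The search stops as soon as the selected node is a
  complete solution (level n); all remaining branches are pruned.\<close>
fun bb_loop :: "(nat \<Rightarrow> bbnode set \<Rightarrow> bbnode) \<Rightarrow> (nat \<times> nat \<Rightarrow> bool) \<Rightarrow> nat
                  \<Rightarrow> nat \<Rightarrow> bbnode set \<Rightarrow> nat" where
  "bb_loop sel G n 0 F = 0"
| "bb_loop sel G n (Suc k) F =
     (if F = {} then 0 else
      (let x = sel n F in
        if fst x = n then 0
        else 2 + bb_loop sel G n k ((F - {x}) \<union> {c \<in> children x. indep G (snd c)})))"

text \<open>The fuel 2^(n+1) exceeds the number of nodes of
  the binary search tree, so it never runs out (every node is expanded at most once).\<close>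
definition bb_nodes :: "(nat \<Rightarrow> bbnode set \<Rightarrow> bbnode) \<Rightarrow> nat \<Rightarrow> (nat \<times> nat \<Rightarrow> bool) \<Rightarrow> nat" where
  "bb_nodes sel n G = 1 + bb_loop sel G n (2 ^ (n + 1)) {(0, {})}"

definition avg_complexity :: "(nat \<Rightarrow> bbnode set \<Rightarrow> bbnode) \<Rightarrow> nat \<Rightarrow> real \<Rightarrow> real" where
  "avg_complexity sel n p = measure_pmf.expectation (gnp n p) (\<lambda>G. real (bb_nodes sel n G))"

definition subexponential :: "(nat \<Rightarrow> real) \<Rightarrow> bool" where
  "subexponential f \<longleftrightarrow> (\<forall>\<epsilon>>0. \<forall>\<^sub>F n in sequentially. f n \<le> exp (\<epsilon> * real n))"

end

theory Submission
  imports Defs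
begin


definition goodset :: "nat \<Rightarrow> nat \<Rightarrow> bbnode set" where
  "goodset n a = {(i,S). i<n \<and> S \<subseteq> {..<i} \<and> a \<le> card S + (n - i)}"

lemma finite_goodset: "finite (goodset n a)"
proof -
  have "goodset n a \<subseteq> {..<n} \<times> Pow {..<n}" unfolding goodset_def by auto
  thus ?thesis by (rule finite_subset) auto
qed

definition inv :: "nat \<Rightarrow> nat set \<Rightarrow> bbnode set \<Rightarrow> bbnode set \<Rightarrow> bool" where
  "inv n T E F \<longleftrightarrow> finite F \<and> F \<inter> E = {} \<and>
     (\<forall>x\<in>E\<union>F. snd x \<subseteq> {..<fst x} \<and> fst x \<le> n \<and>
        (fst x \<noteq> 0 \<longrightarrow> (fst x - 1, snd x - {fst x - 1}) \<in> E)) \<and>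
     (\<exists>i. (i, T \<inter> {..<i}) \<in> F)"

lemma bfD: "best_first_rule sel \<Longrightarrow> finite F \<Longrightarrow> F \<noteq> {} \<Longrightarrow>
   sel n F \<in> F \<and> (\<forall>y\<in>F. potential n y \<le> potential n (sel n F))"
  by (simp add: best_first_rule_def)

lemma indep_subset: "indep G T \<Longrightarrow> S \<subseteq> T \<Longrightarrow> indep G S"
  unfolding indep_def by blast

lemma card_T_le: "T \<subseteq> {..<n} \<Longrightarrow> card T \<le> card (T \<inter> {..<i}) + (n - i)"
proof -
  assume T: "T \<subseteq> {..<n}"
  have "T \<subseteq> (T \<inter> {..<i}) \<union> {i..<n}" using T by auto
  hence "card T \<le> card ((T \<inter> {..<i}) \<union> {i..<n})" by (intro card_mono) auto
  also have "\<dots> \<le> card (T \<inter> {..<i}) + card {i..<n}" by (rule card_Un_le)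
  finally show ?thesis by simp
qed

lemma loop_bound:
  assumes sel: "best_first_rule sel" and T: "T \<subseteq> {..<n}" "indep G T"
  shows "inv n T E F \<Longrightarrow> E \<subseteq> goodset n (card T) \<Longrightarrow>
         bb_loop sel G n k F \<le> 2 * card (goodset n (card T) - E)"
proof (induction k arbitrary: E F)
  case 0
  then show ?case by simp
next
  case (Suc k)
  show ?case
  proof (cases "F = {}")
    case True then show ?thesis by simp
  next
    case Fne: False
    define x where "x = sel n F"
    have finF: "finite F" using Suc.prems(1)[unfolded inv_def] by blast
    have xF: "x \<in> F" and xmax: "\<forall>y\<in>F. potential n y \<le> potential n x"
      using bfD[OF sel finF Fne, of n] unfolding x_def by blast+
    show ?thesis
    proof (cases "fst x = n")
      case True then show ?thesis by (simp add: x_def Let_def Fne)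
    next
      case xn: False
      obtain i S where x: "x = (i, S)" by fastforce
      have inv: "inv n T E F" by fact
      have invD: "finite F" "F \<inter> E = {}" "\<forall>y\<in>E\<union>F. snd y \<subseteq> {..<fst y} \<and> fst y \<le> n \<and>
               (fst y \<noteq> 0 \<longrightarrow> (fst y - 1, snd y - {fst y - 1}) \<in> E)"
         "\<exists>i. (i, T \<inter> {..<i}) \<in> F" using inv[unfolded inv_def] by blast+
      have xE: "x \<notin> E" using invD(2) xF by blast
      have "x \<in> E \<union> F" using xF by simp
      hence "snd x \<subseteq> {..<fst x} \<and> fst x \<le> n" using bspec[OF invD(3)] by simp
      hence Si: "S \<subseteq> {..<i}" and iln: "i \<le> n" unfolding x by auto
      have iln': "i < n" using iln xn x by simp
      obtain w where w: "(w, T \<inter> {..<w}) \<in> F" using invD(4) by blast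
      have "card T \<le> potential n (w, T \<inter> {..<w})"
        unfolding potential_def using card_T_le[OF T(1)] by simp
      also have "\<dots> \<le> potential n x" using xmax w by blast
      finally have "card T \<le> card S + (n - i)" unfolding potential_def x by simp
      hence xgood: "x \<in> goodset n (card T)" unfolding goodset_def x using Si iln' by auto
      define F' where "F' = (F - {x}) \<union> {c \<in> children x. indep G (snd c)}"
      define E' where "E' = insert x E"
      have ch: "children x = {(Suc i, insert i S), (Suc i, S)}" unfolding children_def x by simp
      have inv': "inv n T E' F'"
        unfolding inv_def
      proof (intro conjI)
        show "finite F'" unfolding F'_def using finF ch by auto
        have "c \<notin> E'" if "c \<in> children x" for c
        proof
          assume cE: "c \<in> E'"
          have cc: "c = (Suc i, insert i S) \<or> c = (Suc i, S)" using that ch by blast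
          have pc: "(fst c - 1, snd c - {fst c - 1}) = x" and fc: "fst c \<noteq> 0"
          proof -
            have e1: "insert i S - {i} = S" "S - {i} = S" using Si by auto
            from cc show "(fst c - 1, snd c - {fst c - 1}) = x" using e1 x by (elim disjE) simp_all
            from cc show "fst c \<noteq> 0" by (elim disjE) simp_all
          qed
          have "c \<noteq> x" using cc x by (elim disjE) simp_all
          hence "c \<in> E" using cE unfolding E'_def by blast
          hence "(fst c - 1, snd c - {fst c - 1}) \<in> E" using bspec[OF invD(3)] fc by blast
          thus False using xE pc by simp
        qed
        hence nE: "\<And>c. c \<in> children x \<Longrightarrow> c \<notin> E'" by blast
        have FE: "F \<inter> E = {}" using invD(2) .
        show "F' \<inter> E' = {}"
        proof (rule ccontr)
          assume "F' \<inter> E' \<noteq> {}"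
          then obtain y where y1: "y \<in> F'" "y \<in> E'" by blast
          show False
          proof (cases "y \<in> children x")
            case True thus False using nE y1 by blast
          next
            case False
            hence "y \<in> F" "y \<noteq> x" using y1(1) unfolding F'_def by auto
            moreover have "y \<in> E" using y1(2) \<open>y \<noteq> x\<close> unfolding E'_def by blast
            ultimately show False using FE by blast
          qed
        qed
        note allP = invD(3)
        show "\<forall>y\<in>E' \<union> F'. snd y \<subseteq> {..<fst y} \<and> fst y \<le> n \<and>
               (fst y \<noteq> 0 \<longrightarrow> (fst y - 1, snd y - {fst y - 1}) \<in> E')"
        proof
          fix y assume y: "y \<in> E' \<union> F'"
          show "snd y \<subseteq> {..<fst y} \<and> fst y \<le> n \<and>
               (fst y \<noteq> 0 \<longrightarrow> (fst y - 1, snd y - {fst y - 1}) \<in> E')"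
          proof (cases "y \<in> children x")
            case True
            hence yc: "y = (Suc i, insert i S) \<or> y = (Suc i, S)" using ch by blast
            have e1: "insert i S - {i} = S" "S - {i} = S" using Si by auto
            have xE': "(i, S) \<in> E'" unfolding E'_def x by simp
            have s1: "insert i S \<subseteq> {..<Suc i}" "S \<subseteq> {..<Suc i}" using Si by auto
            from yc show ?thesis
            proof
              assume "y = (Suc i, insert i S)"
              thus ?thesis using e1 xE' s1 iln' by simp
            next
              assume "y = (Suc i, S)"
              thus ?thesis using e1 xE' s1 iln' by simp
            qed
          next
            case False
            hence "y \<in> E \<union> F" using y xF unfolding E'_def F'_def by auto
            hence "snd y \<subseteq> {..<fst y} \<and> fst y \<le> n \<and>
               (fst y \<noteq> 0 \<longrightarrow> (fst y - 1, snd y - {fst y - 1}) \<in> E)" using allP by blast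
            then show ?thesis unfolding E'_def by blast
          qed
        qed
        show "\<exists>j. (j, T \<inter> {..<j}) \<in> F'"
        proof (cases "x = (w, T \<inter> {..<w})")
          case True
          hence wi: "w = i" "S = T \<inter> {..<i}" using x by auto
          define c where "c = (Suc i, T \<inter> {..<Suc i})"
          have "T \<inter> {..<Suc i} = (if i \<in> T then insert i (T \<inter> {..<i}) else T \<inter> {..<i})"
            by (auto simp: lessThan_Suc)
          hence "c \<in> children x" unfolding ch c_def wi(2) by simp
          moreover have "indep G (snd c)" unfolding c_def using indep_subset[OF T(2)] by auto
          ultimately show ?thesis unfolding F'_def c_def by blast
        next
          case False
          then show ?thesis using w unfolding F'_def by blast
        qed
      qed
      have "E' \<subseteq> goodset n (card T)" unfolding E'_def using Suc.prems(2) xgood by blast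
      from Suc.IH[OF inv' this]
      have IH: "bb_loop sel G n k F' \<le> 2 * card (goodset n (card T) - E')" .
      have "card (goodset n (card T) - E) = Suc (card (goodset n (card T) - E'))"
      proof -
        have "goodset n (card T) - E = insert x (goodset n (card T) - E')"
          unfolding E'_def using xgood xE by blast
        moreover have "card (insert x (goodset n (card T) - E')) = Suc (card (goodset n (card T) - E'))"
          by (rule card_insert_disjoint) (auto simp: E'_def intro: finite_goodset)
        ultimately show ?thesis by simp
      qed
      moreover have "bb_loop sel G n (Suc k) F = 2 + bb_loop sel G n k F'"
        using Fne xn unfolding F'_def x_def by (simp add: Let_def)
      ultimately show ?thesis using IH by simp
    qed
  qed
qed

lemma bb_nodes_bound:
  assumes sel: "best_first_rule sel" and T: "T \<subseteq> {..<n}" "indep G T"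
  shows "bb_nodes sel n G \<le> 1 + 2 * card (goodset n (card T))"
proof -
  have "inv n T {} {(0,{})}" unfolding inv_def by (auto intro!: exI[of _ 0])
  from loop_bound[OF sel T this] show ?thesis unfolding bb_nodes_def by simp
qed



definition Dset :: "nat \<Rightarrow> nat \<Rightarrow> nat set set" where
  "Dset n d = {D. D \<subseteq> {..<n} \<and> card D \<le> d}"

lemma card_goodset: "card (goodset n a) \<le> n * card (Dset n (n - a))"
proof -
  define f where "f = (\<lambda>(i::nat, S::nat set). (i, {..<i} - S))"
  have inj: "inj_on f (goodset n a)"
  proof (rule inj_onI)
    fix x y assume x: "x \<in> goodset n a" and y: "y \<in> goodset n a" and e: "f x = f y"
    obtain i S where xi: "x = (i,S)" by fastforce
    obtain j R where yj: "y = (j,R)" by fastforce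
    have "S \<subseteq> {..<i}" "R \<subseteq> {..<j}" using x y xi yj unfolding goodset_def by auto
    moreover have "i = j" "{..<i} - S = {..<j} - R" using e xi yj unfolding f_def by auto
    ultimately have "S = R" by blast
    thus "x = y" using xi yj \<open>i = j\<close> by simp
  qed
  have sub: "f ` goodset n a \<subseteq> {..<n} \<times> Dset n (n - a)"
  proof
    fix z assume "z \<in> f ` goodset n a"
    then obtain i S where iS: "(i,S) \<in> goodset n a" and z: "z = (i, {..<i} - S)"
      unfolding f_def by auto
    have i: "i < n" and S: "S \<subseteq> {..<i}" and a: "a \<le> card S + (n - i)"
      using iS unfolding goodset_def by auto
    have cS: "card S \<le> i" using card_mono[OF _ S] by simp
    have "card ({..<i} - S) = i - card S" using S by (simp add: card_Diff_subset finite_subset)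
    also have "\<dots> \<le> n - a" using a i cS by linarith
    finally show "z \<in> {..<n} \<times> Dset n (n - a)" unfolding z Dset_def using i by auto
  qed
  have "card (goodset n a) = card (f ` goodset n a)" using card_image[OF inj] by simp
  also have "\<dots> \<le> card ({..<n} \<times> Dset n (n - a))"
    by (rule card_mono[OF _ sub]) (auto simp: Dset_def intro: finite_cartesian_product)
  also have "\<dots> = n * card (Dset n (n - a))" by (simp add: card_cartesian_product)
  finally show ?thesis .
qed

lemma finite_Dset: "finite (Dset n d)"
  unfolding Dset_def by (rule finite_subset[of _ "Pow {..<n}"]) auto

lemma card_Dset: assumes t: "0 < t" "t \<le> (1::real)"
  shows "real (card (Dset n d)) \<le> (1+t)^n / t^d"
proof -
  have "real (card (Dset n d)) = (\<Sum>D\<in>Pow {..<n}. if card D \<le> d then 1 else (0::real))"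
  proof -
    have "Dset n d = {D \<in> Pow {..<n}. card D \<le> d}" unfolding Dset_def by auto
    hence "real (card (Dset n d)) = (\<Sum>D\<in>{D \<in> Pow {..<n}. card D \<le> d}. 1::real)" by simp
    also have "\<dots> = (\<Sum>D\<in>Pow {..<n}. if card D \<le> d then 1 else (0::real))"
      by (rule sum.inter_filter) simp
    finally show ?thesis .
  qed
  also have "\<dots> \<le> (\<Sum>D\<in>Pow {..<n}. t^card D / t^d)"
  proof (rule sum_mono)
    fix D :: "nat set"
    show "(if card D \<le> d then 1 else 0) \<le> t ^ card D / t ^ d"
    proof (cases "card D \<le> d")
      case True
      have "t^d \<le> t^card D" by (rule power_decreasing[OF True]) (use t in auto)
      then show ?thesis using True t by simp
    next
      case False then show ?thesis using t by simp
    qed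
  qed
  also have "\<dots> = (\<Sum>D\<in>Pow {..<n}. t^card D) / t^d" by (simp add: sum_divide_distrib)
  also have "(\<Sum>D\<in>Pow {..<n}. t^card D) = (1+t)^n"
  proof -
    have "(\<Prod>x\<in>{..<n}. t + 1) = (\<Sum>X\<in>Pow {..<n}. (\<Prod>x\<in>X. t) * (\<Prod>x\<in>{..<n}-X. 1))"
      by (rule prod_add) simp
    thus ?thesis by (simp add: add.commute)
  qed
  finally show ?thesis .
qed

definition greedyT :: "(nat \<times> nat \<Rightarrow> bool) \<Rightarrow> nat \<Rightarrow> nat set" where
  "greedyT G n = {v. v < n \<and> (\<forall>u<v. \<not> G (u, v))}"

definition nedges :: "(nat \<times> nat \<Rightarrow> bool) \<Rightarrow> nat \<Rightarrow> nat" where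
  "nedges G n = card {e \<in> vertex_pairs n. G e}"

lemma greedy_indep: "indep G (greedyT G n)"
  unfolding indep_def
proof (intro ballI notI)
  fix u v assume u: "u \<in> greedyT G n" and v: "v \<in> greedyT G n" and a: "adj G u v"
  hence uv: "u \<noteq> v" and g: "G (min u v, max u v)" unfolding adj_def by auto
  show False
  proof (cases "u < v")
    case True
    hence "G (u, v)" using g by (simp add: min_def max_def)
    thus False using v True unfolding greedyT_def by auto
  next
    case False
    hence "v < u" using uv by simp
    hence "G (v, u)" using g by (simp add: min_def max_def)
    thus False using u \<open>v < u\<close> unfolding greedyT_def by auto
  qed
qed

lemma greedy_sub: "greedyT G n \<subseteq> {..<n}" unfolding greedyT_def by auto

lemma greedy_card: "n - card (greedyT G n) \<le> nedges G n"
proof -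
  define f where "f = (\<lambda>v. (SOME u. u < v \<and> G (u, v), v))"
  have fin: "finite (vertex_pairs n)"
    unfolding vertex_pairs_def by (rule finite_subset[of _ "{..<n} \<times> {..<n}"]) auto
  have "inj_on f ({..<n} - greedyT G n)" unfolding f_def by (rule inj_onI) simp
  moreover have "f ` ({..<n} - greedyT G n) \<subseteq> {e \<in> vertex_pairs n. G e}"
  proof
    fix z assume "z \<in> f ` ({..<n} - greedyT G n)"
    then obtain v where v: "v < n" "v \<notin> greedyT G n" and z: "z = f v" by auto
    have "\<exists>u. u < v \<and> G (u, v)" using v unfolding greedyT_def by auto
    hence "(SOME u. u < v \<and> G (u, v)) < v \<and> G (SOME u. u < v \<and> G (u, v), v)" by (rule someI_ex)
    thus "z \<in> {e \<in> vertex_pairs n. G e}" using v unfolding z f_def vertex_pairs_def by auto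
  qed
  ultimately have "card ({..<n} - greedyT G n) \<le> nedges G n"
    unfolding nedges_def using fin by (intro card_inj_on_le) auto
  moreover have "card ({..<n} - greedyT G n) = n - card (greedyT G n)"
    using card_Diff_subset[OF finite_subset[OF greedy_sub] greedy_sub] by simp
  ultimately show ?thesis by simp
qed

lemma det_bound:
  assumes sel: "best_first_rule sel" and t: "0 < t" "t \<le> (1::real)"
  shows "real (bb_nodes sel n G) \<le> 1 + 2 * real n * (1+t)^n * (1/t)^(nedges G n)"
proof -
  define T where "T = greedyT G n"
  define Q where "Q = (1+t)^n * (1/t)^(nedges G n)"
  have h1: "real (bb_nodes sel n G) \<le> 1 + 2 * real (card (goodset n (card T)))"
    using bb_nodes_bound[OF sel greedy_sub greedy_indep, of n G] unfolding T_def by linarith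
  have h2: "real (card (goodset n (card T))) \<le> real n * real (card (Dset n (n - card T)))"
    using card_goodset[of n "card T"] by (metis of_nat_le_iff of_nat_mult)
  have h3: "real (card (Dset n (n - card T))) \<le> (1+t)^n / t^(n - card T)"
    by (rule card_Dset[OF t])
  have h4: "(1+t)^n / t^(n - card T) = (1+t)^n * (1/t)^(n - card T)"
    by (simp add: power_one_over)
  have h5: "(1/t)^(n - card T) \<le> (1/t)^(nedges G n)"
    by (rule power_increasing) (use greedy_card[of n G] t in \<open>auto simp: T_def\<close>)
  have "(1+t)^n * (1/t)^(n - card T) \<le> (1+t)^n * (1/t)^(nedges G n)"
    by (rule mult_left_mono[OF h5]) (use t in simp)
  hence "real (card (Dset n (n - card T))) \<le> Q"
    unfolding Q_def using h3 h4 by linarith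
  hence "real n * real (card (Dset n (n - card T))) \<le> real n * Q" by (intro mult_left_mono) auto
  hence "real (card (goodset n (card T))) \<le> real n * Q" using h2 by linarith
  hence "real (bb_nodes sel n G) \<le> 1 + 2 * (real n * Q)" using h1 by linarith
  thus ?thesis unfolding Q_def by (simp add: mult_ac)
qed



lemma finite_vp: "finite (vertex_pairs n)"
  unfolding vertex_pairs_def by (rule finite_subset[of _ "{..<n} \<times> {..<n}"]) auto

lemma card_vp: "card (vertex_pairs n) \<le> n * n"
proof -
  have "card (vertex_pairs n) \<le> card ({..<n} \<times> {..<n})"
    by (rule card_mono) (auto simp: vertex_pairs_def)
  thus ?thesis by (simp add: card_cartesian_product)
qed

lemma finite_gnp: "finite (set_pmf (gnp n q))"
  unfolding gnp_def by (subst set_Pi_pmf[OF finite_vp]) (auto intro!: finite_PiE_dflt finite_vp)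

lemma integrable_gnp: "integrable (measure_pmf (gnp n q)) (f :: _ \<Rightarrow> real)"
  by (rule integrable_measure_pmf_finite[OF finite_gnp])

lemma nedges_prod: "(c::real)^(nedges G n) = (\<Prod>e\<in>vertex_pairs n. if G e then c else 1)"
proof -
  have "(\<Prod>e\<in>vertex_pairs n. if G e then c else 1) = (\<Prod>e\<in>{e \<in> vertex_pairs n. G e}. c)"
    by (rule prod.inter_filter[symmetric]) (rule finite_vp)
  thus ?thesis unfolding nedges_def by simp
qed

lemma exp_bound:
  assumes t: "0 < t" "t \<le> (1::real)" and q: "0 \<le> q" "q \<le> 1"
  shows "measure_pmf.expectation (gnp n q) (\<lambda>G. (1/t)^(nedges G n)) \<le> exp (real n * real n * q / t)"
proof -
  define f where "f = (\<lambda>(e::nat\<times>nat) (b::bool). if b then 1/t else (1::real))"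
  have "measure_pmf.expectation (gnp n q) (\<lambda>G. (1/t)^(nedges G n))
        = measure_pmf.expectation (Pi_pmf (vertex_pairs n) False (\<lambda>_. bernoulli_pmf q))
             (\<lambda>y. \<Prod>e\<in>vertex_pairs n. f e (y e))"
    unfolding gnp_def f_def nedges_prod by simp
  also have "\<dots> = (\<Prod>e\<in>vertex_pairs n. measure_pmf.expectation (bernoulli_pmf q) (f e))"
    by (rule expectation_prod_Pi_pmf)
       (auto simp: f_def finite_vp t less_imp_le[OF t(1)] intro!: integrable_measure_pmf_finite)
  also have "\<dots> = (\<Prod>e\<in>vertex_pairs n. 1 + q * (1/t - 1))"
    using q by (simp add: f_def algebra_simps)
  also have "\<dots> = (1 + q * (1/t - 1)) ^ card (vertex_pairs n)" by simp
  also have "\<dots> \<le> exp (q * (1/t - 1)) ^ card (vertex_pairs n)"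
  proof (rule power_mono)
    show "1 + q * (1/t - 1) \<le> exp (q * (1/t - 1))" by (rule exp_ge_add_one_self)
    have "1/t \<ge> 1" using t by simp
    thus "0 \<le> 1 + q * (1/t - 1)" using q by simp
  qed
  also have "\<dots> = exp (real (card (vertex_pairs n)) * (q * (1/t - 1)))"
    by (simp add: exp_of_nat_mult)
  also have "\<dots> \<le> exp (real n * real n * q / t)"
  proof -
    have a: "0 \<le> q * (1/t - 1)" using t q by simp
    have "real (card (vertex_pairs n)) \<le> real n * real n"
      using card_vp[of n] by (metis of_nat_le_iff of_nat_mult)
    hence "real (card (vertex_pairs n)) * (q * (1/t - 1)) \<le> real n * real n * (q * (1/t - 1))"
      by (rule mult_right_mono[OF _ a])
    also have "\<dots> \<le> real n * real n * q / t"
      using t q by (simp add: field_simps)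
    finally show ?thesis by simp
  qed
  finally show ?thesis .
qed

lemma avg_bound:
  assumes sel: "best_first_rule sel" and t: "0 < t" "t \<le> (1::real)" and q: "0 \<le> q" "q \<le> 1"
  shows "avg_complexity sel n q \<le> 1 + 2 * real n * (1+t)^n * exp (real n * real n * q / t)"
proof -
  define c where "c = 2 * real n * (1+t)^n"
  have c0: "0 \<le> c" unfolding c_def using t by simp
  have "avg_complexity sel n q \<le> measure_pmf.expectation (gnp n q) (\<lambda>G. 1 + c * (1/t)^(nedges G n))"
    unfolding avg_complexity_def
    by (rule integral_mono[OF integrable_gnp integrable_gnp])
       (use det_bound[OF sel t] in \<open>simp add: c_def mult_ac\<close>)
  also have "\<dots> = 1 + c * measure_pmf.expectation (gnp n q) (\<lambda>G. (1/t)^(nedges G n))"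
    by (simp add: integrable_gnp)
  also have "\<dots> \<le> 1 + c * exp (real n * real n * q / t)"
    using mult_left_mono[OF exp_bound[OF t q] c0] by simp
  finally show ?thesis unfolding c_def by simp
qed



lemma lin_exp:
  assumes e: "0 < (e::real)" and n: "real n \<ge> 32 / e^2"
  shows "1 + 2 * real n \<le> exp (e / 2 * real n)"
proof -
  define x where "x = e / 2 * real n"
  have x0: "0 \<le> x" unfolding x_def using e by simp
  have "exp x = exp (x/2)^2" by (simp add: power2_eq_square flip: exp_add)
  also have "\<dots> \<ge> (1 + x/2)^2"
    by (rule power_mono[OF exp_ge_add_one_self]) (use x0 in simp)
  finally have "exp x \<ge> 1 + x^2/4" using x0 by (simp add: power2_eq_square field_simps)
  moreover have "x^2/4 \<ge> 2 * real n"
  proof -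
    have "x^2/4 = real n * (e^2 * real n / 16)" unfolding x_def by (simp add: power2_eq_square field_simps)
    moreover have "e^2 * real n / 16 \<ge> 2"
      using n e by (simp add: field_simps)
    moreover have "real n * 2 \<le> real n * (e^2 * real n / 16)"
      using \<open>e^2 * real n / 16 \<ge> 2\<close> by (rule mult_left_mono) auto
    ultimately show ?thesis by linarith
  qed
  ultimately show ?thesis unfolding x_def by linarith
qed

theorem theorem3:
  fixes p :: "nat \<Rightarrow> real" and sel :: "nat \<Rightarrow> bbnode set \<Rightarrow> bbnode"
  assumes "\<And>n. 0 \<le> p n" and "\<And>n. p n \<le> 1"
    and "(\<lambda>n. real n * p n) \<longlonglongrightarrow> 0"
    and "best_first_rule sel"
  shows "subexponential (\<lambda>n. avg_complexity sel n (p n))"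
  unfolding subexponential_def
proof (intro allI impI)
  fix e :: real assume e: "0 < e"
  define t where "t = min 1 (e/4)"
  have t: "0 < t" "t \<le> 1" "t \<le> e/4" using e unfolding t_def by auto
  have "\<forall>\<^sub>F n in sequentially. dist (real n * p n) 0 < t * (e/4)"
    by (rule tendstoD[OF assms(3)]) (use t e in simp)
  moreover have "\<forall>\<^sub>F n in sequentially. real n \<ge> 32 / e^2"
  proof -
    obtain N :: nat where "real N \<ge> 32 / e^2" using real_arch_simple by blast
    hence "\<forall>n\<ge>N. real n \<ge> 32 / e^2"
    proof (intro allI impI)
      fix n assume "32 / e^2 \<le> real N" "N \<le> n"
      moreover have "real N \<le> real n" using \<open>N \<le> n\<close> by simp
      ultimately show "32 / e^2 \<le> real n" by linarith
    qed
    thus ?thesis by (intro eventually_sequentiallyI[of N]) simp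
  qed
  ultimately show "\<forall>\<^sub>F n in sequentially. avg_complexity sel n (p n) \<le> exp (e * real n)"
  proof eventually_elim
    case (elim n)
    have np: "real n * p n \<le> t * (e/4)" using elim(1) by simp
    have A: "avg_complexity sel n (p n) \<le> 1 + 2 * real n * (1+t)^n * exp (real n * real n * p n / t)"
      by (rule avg_bound[OF assms(4) t(1,2) assms(1,2)])
    have B: "(1+t)^n \<le> exp (e/4 * real n)"
    proof -
      have "(1+t)^n \<le> exp t ^ n"
        by (rule power_mono) (use t exp_ge_add_one_self[of t] in \<open>auto simp: add.commute\<close>)
      also have "\<dots> = exp (t * real n)" using exp_of_nat_mult[of n t] by (simp add: mult.commute)
      also have "\<dots> \<le> exp (e/4 * real n)"
      proof -
        have "t * real n \<le> e/4 * real n" by (rule mult_right_mono) (use t in simp_all)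
        thus ?thesis by simp
      qed
      finally show ?thesis .
    qed
    have C: "exp (real n * real n * p n / t) \<le> exp (e/4 * real n)"
    proof -
      have eq: "real n * real n * p n / t = real n * ((real n * p n) / t)" by simp
      have "(real n * p n) / t \<le> e/4" using np t by (simp add: field_simps)
      hence "real n * ((real n * p n) / t) \<le> real n * (e/4)" by (rule mult_left_mono) simp
      hence "real n * real n * p n / t \<le> e/4 * real n" using eq by (simp only: mult.commute[of "e/4"])
      thus ?thesis by simp
    qed
    have "2 * real n * (1+t)^n * exp (real n * real n * p n / t)
          \<le> 2 * real n * (exp (e/4 * real n) * exp (e/4 * real n))"
    proof -
      have "(1+t)^n * exp (real n * real n * p n / t) \<le> exp (e/4 * real n) * exp (e/4 * real n)"
        by (rule mult_mono[OF B C]) (use t in simp_all)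
      hence "2 * real n * ((1+t)^n * exp (real n * real n * p n / t))
          \<le> 2 * real n * (exp (e/4 * real n) * exp (e/4 * real n))"
        by (rule mult_left_mono) simp
      thus ?thesis by (simp add: mult.assoc)
    qed
    also have "exp (e/4 * real n) * exp (e/4 * real n) = exp (e/2 * real n)"
      by (simp flip: exp_add)
    finally have D: "avg_complexity sel n (p n) \<le> 1 + 2 * real n * exp (e/2 * real n)" using A by simp
    also have "\<dots> \<le> (1 + 2 * real n) * exp (e/2 * real n)"
    proof -
      have "1 \<le> exp (e/2 * real n)" using e by simp
      thus ?thesis by (simp add: algebra_simps)
    qed
    also have "\<dots> \<le> exp (e/2 * real n) * exp (e/2 * real n)"
      by (rule mult_right_mono[OF lin_exp[OF e elim(2)]]) simp
    also have "\<dots> = exp (e * real n)" by (simp flip: exp_add)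
    finally show ?case .
  qed
qed


end
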